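(* Let $N\ge 2$ and $1\le K<N$ be integers, let $\mu>0$ and $0<\epsilon<1$. Let $\mathbf{W}$, $\mathbf{D}$, $\bar{\mathbf W}$, $\mathbf L_{rw}$ be as in the context (directed graph with positive out-degrees and a node reachable from every other node by a directed path), and let $\mathcal A_K$ denote the set of $N\times N$ diagonal matrices $\mathbf A$ with $A_{i,i}\in\{0,1\}$ for all $i$ and $\mathrm{tr}(\mathbf A)=K$. Put $$n \;=\; 3+\max_{i}\sum_{j=1}^{K-1}\bar W_{[j],i},$$ where $\bar W_{[j],i}$ denotes the $j$-th largest entry of the $i$-th column of $\bar{\mathbf W}$. Define constants $c,\delta,\rho>0$ as follows. (i) If $\mu\le 1$: $c = n\big/\min_{\mathbf A\in\mathcal A_K}\lambda_{\min}(\mathbf L_{rw}^\top\mathbf L_{rw}+\epsilon\mathbf A)$, $\delta=\sqrt{1-\epsilon\mu}$, and $\rho=\frac{-\delta c+\sqrt{\delta^2c^2+4\mu}}{2}$. (ii) If $\mu>1$: $c = n\big/\min_{\mathbf A\in\mathcal A_K}\lambda_{\min}(\mathbf A+\epsilon\mathbf L_{rw}^\top\mathbf L_{rw})$, $\rho=\sqrt{\mu-\epsilon}$, and $\delta=\frac{-\rho c+\sqrt{\rho^2c^2+4}}{2}$. Assume that for every $\mathbf A\in\mathcal A_K$ the real matrix $\delta\mathbf A+\rho\mathbf L_{rw}$ is diagonalizable, and fix for each such $\mathbf A$ a factorization $\delta\mathbf A+\rho\mathbf L_{rw}=\mathbf P_{\mathbf A}\boldsymbol\Lambda_{\mathbf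 A}\mathbf P_{\mathbf A}^{-1}$ with $\mathbf P_{\mathbf A}\in\mathbb C^{N\times N}$ invertible and $\boldsymbol\Lambda_{\mathbf A}$ diagonal. Let $\gamma_{\max}=\max_{\mathbf A\in\mathcal A_K}\gamma(\mathbf P_{\mathbf A})$. Then for every $\mathbf A\in\mathcal A_K$ and every diagonal matrix $\mathbf S$ with strictly positive diagonal entries such that $\lambda^-_{\min}\big(\mathbf S(\delta\mathbf A+\rho\mathbf L_{rw})\mathbf S^{-1}\big)\ge 0$, we have $$\frac{\Big(\lambda^-_{\min}\big(\mathbf S(\delta\mathbf A+\rho\mathbf L_{rw})\mathbf S^{-1}\big)\Big)^2}{\gamma_{\max}^2}\;\le\;\lambda_{\min}\big(\mathbf A+\mu\,\mathbf L_{rw}^\top\mathbf L_{rw}\big).$$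
   Context: A directed graph on $N$ nodes is given by an adjacency matrix $\mathbf W\in\mathbb R^{N\times N}$ with $W_{i,j}\ge 0$ ($W_{i,j}>0$ iff there is a directed edge $(i,j)$) and $W_{i,i}=0$ for all $i$. The out-degree matrix is the diagonal matrix $\mathbf D$ with $D_{i,i}=\sum_j W_{i,j}$; it is assumed that $D_{i,i}>0$ for all $i$. The normalized adjacency matrix is $\bar{\mathbf W}=\mathbf D^{-1}\mathbf W$ (so $\bar{\mathbf W}\mathbf 1=\mathbf 1$) and the random-walk Laplacian is $\mathbf L_{rw}=\mathbf I-\bar{\mathbf W}$. It is assumed that there exists a node $v$ such that from every other node there is a directed path to $v$. For a real square matrix $\mathbf M$, $\lambda^-_{\min}(\mathbf M)=\min_i\big(M_{i,i}-\sum_{j\ne i}|M_{i,j}|\big)$ (smallest Gershgorin disc left-end). For a symmetric matrix, $\lambda_{\min},\lambda_{\max}$ denote its smallest/largest eigenvalue. For an invertible complex matrix $\mathbf P$, $\gamma(\mathbf P)=\lambda_{\max}(\mathbf P^*\mathbf P)/\lambda_{\min}(\mathbf P^*\mathbf P)$ ($\mathbf P^*$ the conjugate transpose). *)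

theory Defs
  imports "HOL-Analysis.Analysis" "HOL-Library.Multiset"
begin

definition outdeg :: "real^'n^'n \<Rightarrow> 'n \<Rightarrow> real" where
  "outdeg W i = (\<Sum>j\<in>UNIV. W $ i $ j)"

definition Wbar :: "real^'n^'n \<Rightarrow> real^'n^'n" where
  "Wbar W = (\<chi> i j. W $ i $ j / outdeg W i)"

definition Lrw :: "real^'n^'n \<Rightarrow> real^'n^'n" where
  "Lrw W = mat 1 - Wbar W"

definition edges :: "real^'n^'n \<Rightarrow> ('n \<times> 'n) set" where
  "edges W = {(i, j). W $ i $ j > 0}"

definition lam_min :: "real^'n^'n \<Rightarrow> real" where
  "lam_min M = Min {l. \<exists>v. v \<noteq> 0 \<and> M *v v = l *s v}"

text \<open>Real eigenvalues of a complex (Hermitian) matrix; all its eigenvalues are real.\<close>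
definition c_real_eigs :: "complex^'n^'n \<Rightarrow> real set" where
  "c_real_eigs M = {l. \<exists>v. v \<noteq> 0 \<and> M *v v = complex_of_real l *s v}"

definition lam_min_c :: "complex^'n^'n \<Rightarrow> real" where
  "lam_min_c M = Min (c_real_eigs M)"

definition lam_max_c :: "complex^'n^'n \<Rightarrow> real" where
  "lam_max_c M = Max (c_real_eigs M)"

definition conj_transpose :: "complex^'n^'n \<Rightarrow> complex^'n^'n" where
  "conj_transpose P = (\<chi> i j. cnj (P $ j $ i))"

definition gamma :: "complex^'n^'n \<Rightarrow> real" where
  "gamma P = lam_max_c (conj_transpose P ** P) / lam_min_c (conj_transpose P ** P)"

text \<open>Smallest Gershgorin disc left end.\<close>
definition lam_minus_min :: "real^'n^'n \<Rightarrow> real" where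
  "lam_minus_min M = Min (range (\<lambda>i. M $ i $ i - (\<Sum>j\<in>UNIV - {i}. \<bar>M $ i $ j\<bar>)))"

definition cmat :: "real^'n^'n \<Rightarrow> complex^'n^'n" where
  "cmat M = (\<chi> i j. complex_of_real (M $ i $ j))"

definition is_diag :: "'a::zero^'n^'n \<Rightarrow> bool" where
  "is_diag M \<longleftrightarrow> (\<forall>i j. i \<noteq> j \<longrightarrow> M $ i $ j = 0)"

definition AK :: "nat \<Rightarrow> (real^'n^'n) set" where
  "AK K = {A. is_diag A \<and> (\<forall>i. A $ i $ i \<in> {0, 1}) \<and> trace A = real K}"

text \<open>Entries of column i, in nonincreasing order (index 0 = largest).\<close>
definition col_desc :: "real^'n^'n \<Rightarrow> 'n \<Rightarrow> real list" where
  "col_desc M i = rev (sorted_list_of_multiset (image_mset (\<lambda>j. M $ j $ i) (mset_set UNIV)))"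

definition n_const :: "real^'n^'n \<Rightarrow> nat \<Rightarrow> real" where
  "n_const W K = 3 + Max (range (\<lambda>i. \<Sum>j<K - 1. col_desc (Wbar W) i ! j))"

definition c_const :: "real^'n^'n \<Rightarrow> nat \<Rightarrow> real \<Rightarrow> real \<Rightarrow> real" where
  "c_const W K eps mu =
     (if mu \<le> 1
      then n_const W K / Min ((\<lambda>A. lam_min (transpose (Lrw W) ** Lrw W + eps *\<^sub>R A)) ` AK K)
      else n_const W K / Min ((\<lambda>A. lam_min (A + eps *\<^sub>R (transpose (Lrw W) ** Lrw W))) ` AK K))"

definition delta_const :: "real^'n^'n \<Rightarrow> nat \<Rightarrow> real \<Rightarrow> real \<Rightarrow> real" where
  "delta_const W K eps mu =
     (if mu \<le> 1 then sqrt (1 - eps * mu)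
      else (let c = c_const W K eps mu; r = sqrt (mu - eps)
            in (- r * c + sqrt (r^2 * c^2 + 4)) / 2))"

definition rho_const :: "real^'n^'n \<Rightarrow> nat \<Rightarrow> real \<Rightarrow> real \<Rightarrow> real" where
  "rho_const W K eps mu =
     (if mu \<le> 1
      then (let c = c_const W K eps mu; d = sqrt (1 - eps * mu)
            in (- d * c + sqrt (d^2 * c^2 + 4 * mu)) / 2)
      else sqrt (mu - eps))"

end

theory Submission
  imports Defs
begin


lemma selfadj_min:
  fixes T :: "'a::euclidean_space \<Rightarrow> 'a"
  assumes lin: "linear T" and sa: "\<And>x y. T x \<bullet> y = x \<bullet> T y"
  shows "\<exists>q x0. x0 \<noteq> 0 \<and> T x0 = q *\<^sub>R x0 \<and> (\<forall>x. q * (x \<bullet> x) \<le> x \<bullet> T x)"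
proof -
  interpret bl: bounded_linear T using lin linear_conv_bounded_linear by blast
  have cont: "continuous_on (sphere 0 1) (\<lambda>x. x \<bullet> T x)"
    by (intro continuous_intros bl.continuous_on)
  obtain b :: 'a where b: "b \<in> Basis" using nonempty_Basis by blast
  have ne: "sphere (0::'a) 1 \<noteq> {}" using b by (auto intro!: exI[of _ b])
  obtain x0 where x0: "x0 \<in> sphere 0 1" and mn: "\<And>y. y \<in> sphere 0 1 \<Longrightarrow> x0 \<bullet> T x0 \<le> y \<bullet> T y"
    using continuous_attains_inf[OF compact_sphere ne cont] by blast
  define q where "q = x0 \<bullet> T x0"
  have n1: "x0 \<bullet> x0 = 1" using x0 by (simp add: dot_square_norm)
  have ray: "q * (x \<bullet> x) \<le> x \<bullet> T x" for x
  proof (cases "x = 0")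
    case True then show ?thesis by (simp add: bl.zero)
  next
    case False
    define u where "u = x /\<^sub>R norm x"
    have "u \<in> sphere 0 1" using False by (simp add: u_def)
    then have "q \<le> u \<bullet> T u" using mn q_def by blast
    also have "u \<bullet> T u = (x \<bullet> T x) / (norm x)^2"
      using False by (simp add: u_def bl.scaleR power2_eq_square field_simps)
    finally have "q * (norm x)^2 \<le> x \<bullet> T x" using False by (simp add: field_simps)
    then show ?thesis by (simp add: dot_square_norm)
  qed
  have a0: "(T x0 - q *\<^sub>R x0) \<bullet> y = 0" for y
  proof -
    define a where "a = (T x0 - q *\<^sub>R x0) \<bullet> y"
    define bb where "bb = y \<bullet> T y - q * (y \<bullet> y)"
    have g: "0 \<le> 2 * t * a + t^2 * bb" for t
    proof -
      have "q * ((x0 + t *\<^sub>R y) \<bullet> (x0 + t *\<^sub>R y)) \<le> (x0 + t *\<^sub>R y) \<bullet> T (x0 + t *\<^sub>R y)"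
        by (rule ray)
      moreover have "x0 \<bullet> T y = T x0 \<bullet> y" by (simp add: sa)
      moreover have "y \<bullet> x0 = x0 \<bullet> y" "y \<bullet> T x0 = T x0 \<bullet> y" by (simp_all add: inner_commute)
      ultimately show ?thesis
        by (simp add: a_def bb_def bl.add bl.scaleR inner_add_left inner_add_right inner_diff_left
            algebra_simps power2_eq_square n1 q_def)
    qed
    show ?thesis
    proof (rule ccontr)
      assume "\<not> ?thesis"
      then have an: "a \<noteq> 0" by (simp add: a_def)
      define t where "t = - a / (\<bar>bb\<bar> + 1)"
      have d: "\<bar>bb\<bar> + 1 > 0" by simp
      have "2 * t * a + t^2 * bb \<le> 2 * t * a + t^2 * (\<bar>bb\<bar> + 1)"
        by (intro add_left_mono mult_left_mono) auto
      also have "\<dots> = -(a^2) / (\<bar>bb\<bar> + 1)"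
      proof -
        have e1: "t^2 * (\<bar>bb\<bar> + 1) = a^2 / (\<bar>bb\<bar> + 1)"
          using d by (simp add: t_def power2_eq_square)
        have e2: "2 * t * a = - 2 * a^2 / (\<bar>bb\<bar> + 1)"
          by (simp add: t_def power2_eq_square)
        show ?thesis unfolding e1 e2 add_divide_distrib[symmetric] by simp
      qed
      also have "\<dots> < 0" using an d by (simp add: divide_neg_pos)
      finally show False using g[of t] by linarith
    qed
  qed
  have "T x0 - q *\<^sub>R x0 = 0" using a0[of "T x0 - q *\<^sub>R x0"] by simp
  moreover have "x0 \<noteq> 0" using n1 by auto
  ultimately show ?thesis using ray by (intro exI[of _ q] exI[of _ x0]) auto
qed

lemma selfadj_eigs_finite:
  fixes T :: "'a::euclidean_space \<Rightarrow> 'a"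
  assumes sa: "\<And>x y. T x \<bullet> y = x \<bullet> T y"
  shows "finite {l::real. \<exists>v. v \<noteq> 0 \<and> T v = l *\<^sub>R v}"
proof -
  define E where "E = {l::real. \<exists>v. v \<noteq> 0 \<and> T v = l *\<^sub>R v}"
  define f where "f l = (SOME v. v \<noteq> 0 \<and> T v = l *\<^sub>R v)" for l
  have f: "f l \<noteq> 0 \<and> T (f l) = l *\<^sub>R f l" if "l \<in> E" for l
    using that unfolding E_def f_def by (metis (mono_tags, lifting) mem_Collect_eq someI_ex)
  have orth: "f l \<bullet> f l' = 0" if "l \<in> E" "l' \<in> E" "l \<noteq> l'" for l l'
  proof -
    have "l * (f l \<bullet> f l') = T (f l) \<bullet> f l'" using f[OF that(1)] by simp
    also have "\<dots> = f l \<bullet> T (f l')" by (rule sa)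
    also have "\<dots> = l' * (f l \<bullet> f l')" using f[OF that(2)] by simp
    finally show ?thesis using that(3) by auto
  qed
  have inj: "inj_on f E"
  proof (rule inj_onI)
    fix l l' assume "l \<in> E" "l' \<in> E" "f l = f l'"
    then show "l = l'" using orth[of l l'] f[of l] by (metis inner_eq_zero_iff)
  qed
  have "pairwise orthogonal (f ` E)"
    unfolding pairwise_def orthogonal_def using orth by (metis imageE)
  moreover have "0 \<notin> f ` E" using f by auto
  ultimately have "independent (f ` E)" by (rule pairwise_orthogonal_independent)
  then have "finite (f ` E)" by (rule independent_imp_finite)
  then have "finite E" using inj finite_imageD by blast
  then show ?thesis by (simp add: E_def)
qed



lemma real_sa: "transpose X = X \<Longrightarrow> (X *v x) \<bullet> y = x \<bullet> ((X::real^'n^'n) *v y)"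
  by (metis dot_lmul_matrix inner_commute transpose_matrix_vector)

lemma eigs_real_eq: "{l. \<exists>v. v \<noteq> 0 \<and> X *v v = l *s v} = {l. \<exists>v. v \<noteq> 0 \<and> (X::real^'n^'n) *v v = l *\<^sub>R v}"
  by (simp add: scalar_mult_eq_scaleR)

lemma lam_min_props:
  fixes X :: "real^'n^'n"
  assumes sym: "transpose X = X"
  shows "(\<exists>v. v \<noteq> 0 \<and> X *v v = lam_min X *\<^sub>R v) \<and> (\<forall>x. lam_min X * (x \<bullet> x) \<le> x \<bullet> (X *v x))"
proof -
  have sa: "\<And>x y. (X *v x) \<bullet> y = x \<bullet> (X *v y)" using real_sa[OF sym] .
  obtain q x0 where x0: "x0 \<noteq> 0" "X *v x0 = q *\<^sub>R x0" and r: "\<forall>x. q * (x \<bullet> x) \<le> x \<bullet> (X *v x)"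
    using selfadj_min[of "(*v) X", OF matrix_vector_mul_linear sa] by blast
  have fin: "finite {l. \<exists>v. v \<noteq> 0 \<and> X *v v = l *\<^sub>R v}"
    using selfadj_eigs_finite[of "(*v) X", OF sa] .
  have "Min {l. \<exists>v. v \<noteq> 0 \<and> X *v v = l *\<^sub>R v} = q"
  proof (rule Min_eqI[OF fin])
    fix l assume "l \<in> {l. \<exists>v. v \<noteq> 0 \<and> X *v v = l *\<^sub>R v}"
    then obtain v where v: "v \<noteq> 0" "X *v v = l *\<^sub>R v" by auto
    have "q * (v \<bullet> v) \<le> l * (v \<bullet> v)" using r[rule_format, of v] v by simp
    then show "q \<le> l" using v(1) by simp
  next
    show "q \<in> {l. \<exists>v. v \<noteq> 0 \<and> X *v v = l *\<^sub>R v}" using x0 by auto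
  qed
  then have "lam_min X = q" unfolding lam_min_def eigs_real_eq .
  then show ?thesis using x0 r by auto
qed

lemma cinner_mult_left: "((a::complex) * b) \<bullet> c = b \<bullet> (cnj a * c)"
  by (simp add: inner_complex_def algebra_simps)

lemma ct_adj: "(P *v y) \<bullet> w = y \<bullet> (conj_transpose (P::complex^'n^'n) *v w)"
proof -
  have "(P *v y) \<bullet> w = (\<Sum>i\<in>UNIV. \<Sum>j\<in>UNIV. (P $ i $ j * y $ j) \<bullet> w $ i)"
    by (simp add: inner_vec_def matrix_vector_mult_def inner_sum_left)
  also have "\<dots> = (\<Sum>j\<in>UNIV. \<Sum>i\<in>UNIV. y $ j \<bullet> (cnj (P $ i $ j) * w $ i))"
    by (subst sum.swap) (simp add: cinner_mult_left)
  also have "\<dots> = y \<bullet> (conj_transpose P *v w)"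
    by (simp add: inner_vec_def matrix_vector_mult_def inner_sum_right conj_transpose_def)
  finally show ?thesis .
qed

lemma cscR_comp: "(r *\<^sub>R v) $ i = complex_of_real r * ((v::complex^'n) $ i)"
  by (simp only: vector_scaleR_component) (simp add: scaleR_conv_of_real)

lemma cmv_linear: "linear ((*v) (H::complex^'n^'n))"
proof (rule linearI)
  show "H *v (b1 + b2) = H *v b1 + H *v b2" for b1 b2 by (rule matrix_vector_right_distrib)
  show "H *v (r *\<^sub>R b) = r *\<^sub>R (H *v b)" for r b
    by (simp add: vec_eq_iff matrix_vector_mult_def cscR_comp scaleR_sum_right)
qed

lemma ceig_eq: "(complex_of_real l *s v) = l *\<^sub>R (v::complex^'n)"
  unfolding vec_eq_iff cscR_comp by simp

lemma PP_props:
  fixes P :: "complex^'n^'n"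
  defines "H \<equiv> conj_transpose P ** P"
  shows "(\<exists>v. v \<noteq> 0 \<and> H *v v = lam_min_c H *\<^sub>R v) \<and>
     (\<forall>z. lam_min_c H * (z \<bullet> z) \<le> (P *v z) \<bullet> (P *v z) \<and> (P *v z) \<bullet> (P *v z) \<le> lam_max_c H * (z \<bullet> z))"
proof -
  have ray: "z \<bullet> (H *v z) = (P *v z) \<bullet> (P *v z)" for z
    by (simp add: H_def ct_adj matrix_vector_mul_assoc[symmetric] inner_commute)
  have sa: "\<And>x y. (H *v x) \<bullet> y = x \<bullet> (H *v y)"
  proof -
    fix x y
    have "(H *v x) \<bullet> y = y \<bullet> (conj_transpose P *v (P *v x))"
      by (simp add: H_def matrix_vector_mul_assoc[symmetric] inner_commute)
    also have "\<dots> = (P *v y) \<bullet> (P *v x)" by (simp add: ct_adj)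
    also have "\<dots> = x \<bullet> (H *v y)"
      by (simp add: H_def matrix_vector_mul_assoc[symmetric] inner_commute ct_adj)
    finally show "(H *v x) \<bullet> y = x \<bullet> (H *v y)" .
  qed
  have ceq: "c_real_eigs H = {l. \<exists>v. v \<noteq> 0 \<and> H *v v = l *\<^sub>R v}"
    by (simp add: c_real_eigs_def ceig_eq)
  have fin: "finite (c_real_eigs H)"
    unfolding ceq using selfadj_eigs_finite[of "(*v) H", OF sa] .
  obtain q x0 where x0: "x0 \<noteq> 0" "H *v x0 = q *\<^sub>R x0" and r: "\<forall>x. q * (x \<bullet> x) \<le> x \<bullet> (H *v x)"
    using selfadj_min[of "(*v) H", OF cmv_linear sa] by blast
  have "lam_min_c H = q" unfolding lam_min_c_def
  proof (rule Min_eqI[OF fin])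
    fix l assume "l \<in> c_real_eigs H"
    then obtain v where v: "v \<noteq> 0" "H *v v = l *\<^sub>R v" by (auto simp: ceq)
    have "q * (v \<bullet> v) \<le> l * (v \<bullet> v)" using r[rule_format, of v] v by simp
    then show "q \<le> l" using v(1) by simp
  next
    show "q \<in> c_real_eigs H" using x0 by (auto simp: ceq)
  qed
  have sa2: "\<And>x y. (- (H *v x)) \<bullet> y = x \<bullet> (- (H *v y))" using sa by simp
  have lin2: "linear (\<lambda>x. - (H *v x))" using cmv_linear[of H] by (simp add: linear_compose_neg)
  obtain q' x1 where x1: "x1 \<noteq> 0" "- (H *v x1) = q' *\<^sub>R x1" and r': "\<forall>x. q' * (x \<bullet> x) \<le> x \<bullet> (- (H *v x))"
    using selfadj_min[of "\<lambda>x. - (H *v x)", OF lin2 sa2] by blast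
  have "lam_max_c H = - q'" unfolding lam_max_c_def
  proof (rule Max_eqI[OF fin])
    fix l assume "l \<in> c_real_eigs H"
    then obtain v where v: "v \<noteq> 0" "H *v v = l *\<^sub>R v" by (auto simp: ceq)
    have "q' * (v \<bullet> v) \<le> (- l) * (v \<bullet> v)" using r'[rule_format, of v] v by simp
    moreover have pos: "0 < v \<bullet> v" using v(1) by simp
    ultimately show "l \<le> - q'" using mult_le_cancel_right_pos[OF pos, of q' "-l"] by simp
  next
    have "H *v x1 = (- q') *\<^sub>R x1" using x1(2) by (metis minus_minus scaleR_minus_left)
    then show "- q' \<in> c_real_eigs H" using x1 by (auto simp: ceq)
  qed
  show ?thesis
  proof (intro conjI allI)
    show "\<exists>v. v \<noteq> 0 \<and> H *v v = lam_min_c H *\<^sub>R v" using x0 \<open>lam_min_c H = q\<close> by auto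
  next
    fix z show "lam_min_c H * (z \<bullet> z) \<le> (P *v z) \<bullet> (P *v z)"
      using r \<open>lam_min_c H = q\<close> ray by metis
  next
    fix z show "(P *v z) \<bullet> (P *v z) \<le> lam_max_c H * (z \<bullet> z)"
      using r'[rule_format, of z] \<open>lam_max_c H = - q'\<close> ray[of z] by simp
  qed
qed



lemma cmat_mv: "(cmat N *v w) $ i = (\<Sum>j\<in>UNIV. complex_of_real (N $ i $ j) * w $ j)"
  by (simp add: cmat_def matrix_vector_mult_def)

lemma gersh_eig:
  fixes N :: "real^'n^'n" and w :: "complex^'n"
  assumes w0: "w \<noteq> 0" and ev: "cmat N *v w = lam *s w"
  shows "lam_minus_min N \<le> Re lam"
proof -
  define m where "m = Max (range (\<lambda>j. norm (w $ j)))"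
  have "m \<in> range (\<lambda>j. norm (w $ j))" unfolding m_def by (intro Max_in) auto
  then obtain i where i: "norm (w $ i) = m" by auto
  have le: "norm (w $ j) \<le> norm (w $ i)" for j unfolding i m_def by (intro Max_ge) auto
  obtain j0 where "w $ j0 \<noteq> 0" using w0 by (auto simp: vec_eq_iff)
  then have wi: "norm (w $ i) > 0" using le[of j0] by (metis zero_less_norm_iff order_less_le_trans)
  define R where "R = (\<Sum>j\<in>UNIV - {i}. \<bar>N $ i $ j\<bar>)"
  have "(\<Sum>j\<in>UNIV. complex_of_real (N $ i $ j) * w $ j) = lam * w $ i"
    using arg_cong[OF ev, of "\<lambda>v. v $ i"] by (simp add: cmat_mv)
  moreover have "(\<Sum>j\<in>UNIV. complex_of_real (N $ i $ j) * w $ j)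
     = complex_of_real (N $ i $ i) * w $ i + (\<Sum>j\<in>UNIV - {i}. complex_of_real (N $ i $ j) * w $ j)"
    by (subst sum.remove[of UNIV i]) auto
  ultimately have eq: "(lam - complex_of_real (N $ i $ i)) * w $ i = (\<Sum>j\<in>UNIV - {i}. complex_of_real (N $ i $ j) * w $ j)"
    by (simp add: algebra_simps)
  have "norm (lam - complex_of_real (N $ i $ i)) * norm (w $ i)
      \<le> (\<Sum>j\<in>UNIV - {i}. \<bar>N $ i $ j\<bar> * norm (w $ j))"
    unfolding norm_mult[symmetric] eq by (rule order_trans[OF norm_sum]) (simp add: norm_mult)
  also have "\<dots> \<le> (\<Sum>j\<in>UNIV - {i}. \<bar>N $ i $ j\<bar> * norm (w $ i))"
    by (intro sum_mono mult_left_mono le) auto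
  also have "\<dots> = R * norm (w $ i)" by (simp add: R_def sum_distrib_right)
  finally have "norm (lam - complex_of_real (N $ i $ i)) \<le> R" using wi by simp
  moreover have "- norm (lam - complex_of_real (N $ i $ i)) \<le> Re lam - N $ i $ i"
    using abs_Re_le_cmod[of "lam - complex_of_real (N $ i $ i)"] by simp
  ultimately have "N $ i $ i - R \<le> Re lam" by linarith
  moreover have "lam_minus_min N \<le> N $ i $ i - R"
    unfolding lam_minus_min_def R_def by (intro Min_le) auto
  ultimately show ?thesis by linarith
qed

definition cvec :: "real^'n \<Rightarrow> complex^'n" where
  "cvec x = (\<chi> i. complex_of_real (x $ i))"

lemma cvec_inner: "cvec x \<bullet> cvec y = x \<bullet> y"
  by (simp add: cvec_def inner_vec_def inner_complex_def)

lemma cmat_cvec: "cmat M *v cvec x = cvec (M *v x)"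
  by (simp add: cvec_def cmat_def matrix_vector_mult_def vec_eq_iff)

lemma inv_props: "invertible (P::'a::semiring_1^'n^'n) \<Longrightarrow> P ** matrix_inv P = mat 1 \<and> matrix_inv P ** P = mat 1"
  unfolding invertible_def matrix_inv_def by (rule someI_ex)

lemma ray_PP: "z \<bullet> ((conj_transpose P ** P) *v z) = (P *v z) \<bullet> ((P::complex^'n^'n) *v z)"
  by (simp add: ct_adj matrix_vector_mul_assoc[symmetric] inner_commute)

lemma diag_bound:
  fixes P Lam :: "complex^'n^'n" and M :: "real^'n^'n"
  assumes inv: "invertible P" and dg: "is_diag Lam" and fact: "cmat M = P ** Lam ** matrix_inv P"
    and g0: "0 \<le> g"
    and eg: "\<And>w lam. w \<noteq> 0 \<Longrightarrow> cmat M *v w = lam *s w \<Longrightarrow> g \<le> Re lam"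
  shows "1 \<le> gamma P \<and> g^2 * (x \<bullet> x) \<le> gamma P * ((M *v x) \<bullet> (M *v x))"
proof -
  define H where "H = conj_transpose P ** P"
  define lmin where "lmin = lam_min_c H"
  define lmax where "lmax = lam_max_c H"
  have PP: "\<And>z. lmin * (z \<bullet> z) \<le> (P *v z) \<bullet> (P *v z) \<and> (P *v z) \<bullet> (P *v z) \<le> lmax * (z \<bullet> z)"
    using PP_props[of P] by (simp add: H_def lmin_def lmax_def)
  obtain v where v: "v \<noteq> 0" "H *v v = lmin *\<^sub>R v"
    using PP_props[of P] by (auto simp: H_def lmin_def)
  have ip: "P ** matrix_inv P = mat 1" "matrix_inv P ** P = mat 1" using inv_props[OF inv] by auto
  have Pnz: "P *v z \<noteq> 0" if "z \<noteq> 0" for z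
  proof
    assume "P *v z = 0"
    then have "matrix_inv P *v (P *v z) = 0" by simp
    then show False using that by (simp add: matrix_vector_mul_assoc ip)
  qed
  have "lmin * (v \<bullet> v) = (P *v v) \<bullet> (P *v v)"
    using ray_PP[of v P] v(2) by (simp add: H_def)
  also have "\<dots> > 0" using Pnz[OF v(1)] by simp
  finally have lmin_pos: "lmin > 0" using v(1)
    by (metis inner_gt_zero_iff zero_less_mult_pos2)
  have "lmin * (v \<bullet> v) \<le> lmax * (v \<bullet> v)" using PP[of v] by linarith
  then have "lmin \<le> lmax" using v(1) by simp
  then have gam: "gamma P = lmax / lmin" "1 \<le> gamma P"
    using lmin_pos by (simp_all add: gamma_def H_def lmin_def lmax_def)
  have Lmv: "(Lam *v y) $ j = Lam $ j $ j * y $ j" for y j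
  proof -
    have "(Lam *v y) $ j = (\<Sum>k\<in>UNIV. Lam $ j $ k * y $ k)" by (simp add: matrix_vector_mult_def)
    also have "\<dots> = Lam $ j $ j * y $ j"
      using dg unfolding is_diag_def by (subst sum.remove[of UNIV j]) (auto intro!: sum.neutral)
    finally show ?thesis .
  qed
  have PLP: "P ** Lam ** matrix_inv P ** P = P ** Lam" by (metis matrix_mul_assoc ip(2) matrix_mul_rid)
  have MP: "cmat M *v (P *v y) = P *v (Lam *v y)" for y
    by (simp add: fact matrix_vector_mul_assoc PLP)
  have diag_ge: "g^2 \<le> (norm (Lam $ j $ j))^2" for j
  proof -
    define e where "e = P *v axis j 1"
    have "e \<noteq> 0" unfolding e_def by (rule Pnz) (simp add: axis_eq_0_iff)
    moreover have "cmat M *v e = Lam $ j $ j *s e"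
    proof -
      have "Lam *v axis j 1 = Lam $ j $ j *s axis j 1"
        by (simp add: vec_eq_iff Lmv axis_def)
      then show ?thesis by (simp add: e_def MP vector_scalar_commute)
    qed
    ultimately have "g \<le> Re (Lam $ j $ j)" by (rule eg)
    also have "\<dots> \<le> norm (Lam $ j $ j)" by (rule complex_Re_le_cmod)
    finally show ?thesis using g0 by (simp add: power_mono)
  qed
  define X where "X = cvec x"
  define y where "y = matrix_inv P *v X"
  have Py: "P *v y = X" by (simp add: y_def matrix_vector_mul_assoc ip(1))
  have MX: "cvec (M *v x) = P *v (Lam *v y)"
    using MP[of y] by (simp add: Py X_def cmat_cvec)
  have "g^2 * (y \<bullet> y) \<le> (Lam *v y) \<bullet> (Lam *v y)"
  proof -
    have "g^2 * (y \<bullet> y) = (\<Sum>j\<in>UNIV. g^2 * (y $ j \<bullet> y $ j))"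
      by (simp add: inner_vec_def sum_distrib_left)
    also have "\<dots> \<le> (\<Sum>j\<in>UNIV. (Lam *v y) $ j \<bullet> (Lam *v y) $ j)"
    proof (rule sum_mono)
      fix j
      have "(Lam *v y) $ j \<bullet> (Lam *v y) $ j = (norm (Lam $ j $ j))^2 * (y $ j \<bullet> y $ j)"
        by (simp add: Lmv dot_square_norm norm_mult power_mult_distrib)
      then show "g^2 * (y $ j \<bullet> y $ j) \<le> (Lam *v y) $ j \<bullet> (Lam *v y) $ j"
        using diag_ge[of j] by (simp add: mult_right_mono)
    qed
    also have "\<dots> = (Lam *v y) \<bullet> (Lam *v y)" by (simp add: inner_vec_def)
    finally show ?thesis .
  qed
  then have "lmin * (g^2 * (y \<bullet> y)) \<le> lmin * ((Lam *v y) \<bullet> (Lam *v y))"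
    using lmin_pos by simp
  also have "\<dots> \<le> (M *v x) \<bullet> (M *v x)"
    using PP[of "Lam *v y"] MX cvec_inner[of "M *v x" "M *v x"] by simp
  finally have A1: "lmin * (g^2 * (y \<bullet> y)) \<le> (M *v x) \<bullet> (M *v x)" .
  have "x \<bullet> x \<le> lmax * (y \<bullet> y)" using PP[of y] Py cvec_inner[of x x] by (simp add: X_def)
  then have "g^2 * (x \<bullet> x) \<le> g^2 * (lmax * (y \<bullet> y))" by (simp add: mult_left_mono)
  also have "\<dots> = gamma P * (lmin * (g^2 * (y \<bullet> y)))" using gam lmin_pos by simp
  also have "\<dots> \<le> gamma P * ((M *v x) \<bullet> (M *v x))"
    using A1 gam by (intro mult_left_mono) auto
  finally show ?thesis using gam by simp
qed



lemma top_sum: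
  fixes xs :: "real list"
  assumes "sorted_wrt (\<ge>) xs" "B \<subseteq># mset xs"
  shows "sum_mset B \<le> sum_list (take (size B) xs)"
  using assms
proof (induction xs arbitrary: B)
  case Nil then show ?case by simp
next
  case (Cons a ys)
  have ge: "\<And>b. b \<in> set ys \<Longrightarrow> b \<le> a" using Cons.prems(1) by simp
  have sy: "sorted_wrt (\<ge>) ys" using Cons.prems(1) by simp
  show ?case
  proof (cases "B = {#}")
    case True then show ?thesis by simp
  next
    case False
    then obtain m where sz: "size B = Suc m" by (cases "size B") auto
    show ?thesis
    proof (cases "a \<in># B")
      case True
      define B' where "B' = B - {#a#}"
      have B: "B = add_mset a B'" using True by (simp add: B'_def)
      have "B' \<subseteq># mset ys" using Cons.prems(2) B by (simp add: subset_mset.add_diff_inverse)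
      then have "sum_mset B' \<le> sum_list (take (size B') ys)" by (rule Cons.IH[OF sy])
      then show ?thesis by (simp add: B)
    next
      case False
      obtain b where b: "b \<in># B" using \<open>B \<noteq> {#}\<close> by (meson multiset_nonemptyE)
      define B' where "B' = B - {#b#}"
      have B: "B = add_mset b B'" using b by (simp add: B'_def)
      have sub: "B \<subseteq># mset ys" using Cons.prems(2) False
        by (simp add: inter_add_left1 subset_mset.inf.absorb_iff2)
      then have "b \<in> set ys" using b by (metis mset_subset_eqD set_mset_mset)
      then have "b \<le> a" by (rule ge)
      have "B' \<subseteq># mset ys" unfolding B'_def using sub by (rule subset_mset.trans[OF diff_subset_eq_self])
      then have "sum_mset B' \<le> sum_list (take (size B') ys)" by (rule Cons.IH[OF sy])
      then show ?thesis using \<open>b \<le> a\<close> by (simp add: B)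
    qed
  qed
qed



lemma col_top:
  fixes M :: "real^'n^'n"
  assumes nn: "\<And>j. M $ j $ i \<ge> 0" and cJ: "card J \<le> m" and mC: "m \<le> CARD('n)"
  shows "sum (\<lambda>j. M $ j $ i) J \<le> (\<Sum>k<m. col_desc M i ! k)"
proof -
  define f where "f j = M $ j $ i" for j
  define xs where "xs = col_desc M i"
  have mx: "mset xs = image_mset f (mset_set UNIV)"
    by (simp add: xs_def col_desc_def f_def[abs_def])
  have sx: "sorted_wrt (\<ge>) xs"
    by (simp add: xs_def col_desc_def sorted_wrt_rev)
  have lx: "length xs = CARD('n)"
    using arg_cong[OF mx, of size] by simp
  have nnx: "\<And>b. b \<in> set xs \<Longrightarrow> 0 \<le> b"
    using mx nn by (metis f_def imageE set_image_mset set_mset_mset)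
  define B where "B = image_mset f (mset_set J)"
  have "B \<subseteq># mset xs" unfolding B_def mx
    by (intro image_mset_subseteq_mono subset_imp_msubset_mset_set) auto
  then have "sum_mset B \<le> sum_list (take (size B) xs)" by (rule top_sum[OF sx])
  moreover have "sum f J = sum_mset B" by (simp add: B_def sum_unfold_sum_mset)
  moreover have "size B = card J" by (simp add: B_def)
  moreover have "sum_list (take (card J) xs) \<le> sum_list (take m xs)"
  proof -
    have "take m xs = take (card J) xs @ take (m - card J) (drop (card J) xs)"
      using cJ by (metis le_add_diff_inverse take_add)
    moreover have "0 \<le> sum_list (take (m - card J) (drop (card J) xs))"
      by (rule sum_list_nonneg) (meson in_set_dropD in_set_takeD nnx)
    ultimately show ?thesis by simp
  qed
  moreover have "sum_list (take m xs) = (\<Sum>k<m. xs ! k)"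
    using mC lx by (simp add: sum_list_sum_nth atLeast0LessThan min_def)
  ultimately show ?thesis by (simp add: f_def xs_def)
qed



lemma Wbar_nn: "\<forall>i j. W $ i $ j \<ge> 0 \<Longrightarrow> \<forall>i. outdeg W i > 0 \<Longrightarrow> Wbar W $ i $ j \<ge> 0"
  by (simp add: Wbar_def less_imp_le)

lemma Wbar_pos: "\<forall>i. outdeg W i > 0 \<Longrightarrow> W $ i $ j > 0 \<Longrightarrow> Wbar W $ i $ j > 0"
  by (simp add: Wbar_def)

lemma Wbar_rowsum: "\<forall>i. outdeg W i > 0 \<Longrightarrow> (\<Sum>j\<in>UNIV. Wbar W $ i $ j) = 1"
proof -
  assume dp: "\<forall>i. outdeg W i > 0"
  then have "outdeg W i \<noteq> 0" by (metis less_irrefl)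
  then show ?thesis by (simp add: Wbar_def sum_divide_distrib[symmetric] outdeg_def[symmetric])
qed

lemma Wbar_le1: "\<forall>i j. W $ i $ j \<ge> 0 \<Longrightarrow> \<forall>i. outdeg W i > 0 \<Longrightarrow> Wbar W $ i $ j \<le> 1"
proof -
  assume nn: "\<forall>i j. W $ i $ j \<ge> 0" and dp: "\<forall>i. outdeg W i > 0"
  have "W $ i $ j \<le> outdeg W i" unfolding outdeg_def
    by (rule member_le_sum) (use nn in auto)
  then show ?thesis using dp by (simp add: Wbar_def)
qed

lemma Lrw_mv: "(Lrw W *v x) $ i = x $ i - (\<Sum>j\<in>UNIV. Wbar W $ i $ j * x $ j)"
  by (simp add: Lrw_def matrix_vector_mult_diff_rdistrib) (simp add: matrix_vector_mult_def)

lemma ker_max: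
  assumes nn: "\<forall>i j. W $ i $ j \<ge> 0" and dp: "\<forall>i. outdeg W i > 0"
    and eq: "\<And>i. v $ i = (\<Sum>j\<in>UNIV. Wbar W $ i $ j * v $ j)"
    and path: "(u, r) \<in> (edges W)\<^sup>*"
    and u: "v $ u = Max (range (\<lambda>i. v $ i))"
  shows "v $ r = Max (range (\<lambda>i. v $ i))"
  using path
proof (induction rule: rtrancl_induct)
  case base then show ?case by (rule u)
next
  case (step y z)
  define Mx where "Mx = Max (range (\<lambda>i. v $ i))"
  have le: "v $ j \<le> Mx" for j unfolding Mx_def by (intro Max_ge) auto
  have "(\<Sum>j\<in>UNIV. Wbar W $ y $ j * (Mx - v $ j)) = Mx * (\<Sum>j\<in>UNIV. Wbar W $ y $ j) - v $ y"
    by (simp add: eq[of y] algebra_simps sum_subtractf sum_distrib_left)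
  also have "\<dots> = 0" using Wbar_rowsum[OF dp] step.IH by (simp add: Mx_def)
  finally have s0: "(\<Sum>j\<in>UNIV. Wbar W $ y $ j * (Mx - v $ j)) = 0" .
  have all0: "\<forall>j\<in>UNIV. Wbar W $ y $ j * (Mx - v $ j) = 0"
    using s0 sum_nonneg_eq_0_iff[of UNIV "\<lambda>j. Wbar W $ y $ j * (Mx - v $ j)"]
      Wbar_nn[OF nn dp] le by (simp add: mult_nonneg_nonneg)
  moreover have "Wbar W $ y $ z > 0" using step.hyps(2) Wbar_pos[OF dp] by (simp add: edges_def)
  moreover have "Wbar W $ y $ z * (Mx - v $ z) = 0" using all0 by blast
  ultimately show ?case unfolding Mx_def by simp
qed

lemma AK_entry: "B \<in> AK K \<Longrightarrow> B $ i $ i = 0 \<or> B $ i $ i = 1"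
  by (simp add: AK_def)

lemma AK_mv: "B \<in> AK K \<Longrightarrow> (B *v x) $ i = B $ i $ i * x $ i"
proof -
  assume "B \<in> AK K"
  then have d: "is_diag B" by (simp add: AK_def)
  have "(B *v x) $ i = (\<Sum>k\<in>UNIV. B $ i $ k * x $ k)" by (simp add: matrix_vector_mult_def)
  also have "\<dots> = B $ i $ i * x $ i"
    using d unfolding is_diag_def by (subst sum.remove[of UNIV i]) (auto intro!: sum.neutral)
  finally show ?thesis .
qed

lemma AK_card: "B \<in> AK K \<Longrightarrow> card {i. B $ i $ i = 1} = K"
proof -
  assume B: "B \<in> AK K"
  define I where "I = {i. B $ i $ i = 1}"
  have "real K = (\<Sum>i\<in>UNIV. B $ i $ i)" using B by (simp add: AK_def trace_def)
  also have "\<dots> = (\<Sum>i\<in>UNIV. if i \<in> I then 1 else 0)"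
    by (rule sum.cong) (use AK_entry[OF B] in \<open>auto simp: I_def\<close>)
  also have "\<dots> = real (card I)" by (simp add: sum.If_cases)
  finally show ?thesis by (simp add: I_def)
qed

lemma AK_transpose: "B \<in> AK K \<Longrightarrow> transpose B = B"
proof -
  assume B: "B \<in> AK K"
  have "B $ j $ i = B $ i $ j" for i j
    using B by (cases "i = j") (auto simp: AK_def is_diag_def)
  then show ?thesis by (simp add: transpose_def vec_eq_iff)
qed

lemma AK_finite: "finite (AK K :: (real^'n^'n) set)"
proof -
  have "AK K \<subseteq> (\<lambda>s. (\<chi> i j. if i = j \<and> i \<in> s then 1 else (0::real))) ` (UNIV :: 'n set set)"
  proof
    fix B :: "real^'n^'n" assume B: "B \<in> AK K"
    define I where "I = {k. B $ k $ k = 1}"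
    have e: "B $ i $ j = (if i = j \<and> i \<in> I then 1 else 0)" for i j
    proof (cases "i = j")
      case True then show ?thesis using AK_entry[OF B, of i] by (auto simp: I_def)
    next
      case False then show ?thesis using B by (simp add: AK_def is_diag_def)
    qed
    have "B = (\<chi> i j. if i = j \<and> i \<in> I then 1 else 0)"
      by (simp only: vec_eq_iff vec_lambda_beta e) simp
    then show "B \<in> (\<lambda>s. (\<chi> i j. if i = j \<and> i \<in> s then 1 else (0::real))) ` UNIV" by blast
  qed
  then show ?thesis by (rule finite_subset) simp
qed



lemma ker_zero:
  assumes nn: "\<forall>i j. W $ i $ j \<ge> 0" and dp: "\<forall>i. outdeg W i > 0"
    and root: "\<exists>v. \<forall>u. (u, v) \<in> (edges W)\<^sup>*"
    and K1: "1 \<le> K" and B: "B \<in> AK K"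
    and Lv: "Lrw W *v v = 0" and Bv: "B *v v = 0"
  shows "v = 0"
proof -
  obtain r where r: "\<And>u. (u, r) \<in> (edges W)\<^sup>*" using root by blast
  have eq: "\<And>i. v $ i = (\<Sum>j\<in>UNIV. Wbar W $ i $ j * v $ j)"
  proof -
    fix i
    have "(Lrw W *v v) $ i = 0" using Lv by simp
    then show "v $ i = (\<Sum>j\<in>UNIV. Wbar W $ i $ j * v $ j)" unfolding Lrw_mv by simp
  qed
  have eqn: "\<And>i. (- v) $ i = (\<Sum>j\<in>UNIV. Wbar W $ i $ j * (- v) $ j)"
  proof -
    fix i
    have "(- v) $ i = - (\<Sum>j\<in>UNIV. Wbar W $ i $ j * v $ j)"
      by (simp only: vector_uminus_component eq[of i])
    also have "\<dots> = (\<Sum>j\<in>UNIV. Wbar W $ i $ j * (- v) $ j)" by (simp add: sum_negf)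
    finally show "(- v) $ i = (\<Sum>j\<in>UNIV. Wbar W $ i $ j * (- v) $ j)" .
  qed
  have up: "w $ u \<le> w $ r" if e: "\<And>i. w $ i = (\<Sum>j\<in>UNIV. Wbar W $ i $ j * w $ j)" for w and u
  proof -
    define Mx where "Mx = Max (range (\<lambda>i. w $ i))"
    have "Mx \<in> range (\<lambda>i. w $ i)" unfolding Mx_def by (intro Max_in) auto
    then obtain u0 where "w $ u0 = Mx" by auto
    then have "w $ r = Mx" using ker_max[OF nn dp e r[of u0]] by (simp add: Mx_def)
    moreover have "w $ u \<le> Mx" unfolding Mx_def by (intro Max_ge) auto
    ultimately show ?thesis by simp
  qed
  have const: "v $ u = v $ r" for u using up[OF eq, of u] up[OF eqn, of u] by simp
  have "{i. B $ i $ i = 1} \<noteq> {}"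
  proof
    assume "{i. B $ i $ i = 1} = {}"
    then have "card {i. B $ i $ i = 1} = 0" by simp
    then show False using AK_card[OF B] K1 by simp
  qed
  then obtain k where k: "B $ k $ k = 1" by auto
  have "v $ k = 0" using arg_cong[OF Bv, of "\<lambda>w. w $ k"] AK_mv[OF B] k by simp
  then have "v $ r = 0" using const[of k] by simp
  then show ?thesis using const unfolding vec_eq_iff by simp
qed



lemma col_bound:
  fixes W B :: "real^'n^'n"
  assumes nn: "\<forall>i j. W $ i $ j \<ge> 0" and dp: "\<forall>i. outdeg W i > 0" and wd: "\<forall>i. W $ i $ i = 0"
    and K1: "1 \<le> K" and KN: "K < CARD('n)" and B: "B \<in> AK K"
  shows "3 * B $ j $ j + (\<Sum>i\<in>UNIV. B $ i $ i * Wbar W $ i $ j) \<le> n_const W K"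
proof -
  define I where "I = {i. B $ i $ i = 1}"
  have cI: "card I = K" using AK_card[OF B] by (simp add: I_def)
  have C: "(\<Sum>i\<in>UNIV. B $ i $ i * Wbar W $ i $ j) = (\<Sum>i\<in>I. Wbar W $ i $ j)"
  proof -
    have "(\<Sum>i\<in>UNIV. B $ i $ i * Wbar W $ i $ j) = (\<Sum>i\<in>UNIV. if i \<in> I then Wbar W $ i $ j else 0)"
      by (rule sum.cong) (use AK_entry[OF B] in \<open>auto simp: I_def\<close>)
    also have "\<dots> = (\<Sum>i\<in>I. Wbar W $ i $ j)" by (simp add: sum.If_cases)
    finally show ?thesis .
  qed
  define T where "T = (\<Sum>k<K - 1. col_desc (Wbar W) j ! k)"
  have Tn: "3 + T \<le> n_const W K" unfolding n_const_def T_def by (intro add_left_mono Max_ge) auto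
  have wnn: "\<And>i. Wbar W $ i $ j \<ge> 0" using Wbar_nn[OF nn dp] .
  have top: "sum (\<lambda>i. Wbar W $ i $ j) J \<le> T" if "card J \<le> K - 1" for J
    unfolding T_def by (rule col_top[OF wnn that]) (use KN in simp)
  show ?thesis
  proof (cases "j \<in> I")
    case True
    have "(\<Sum>i\<in>I. Wbar W $ i $ j) = Wbar W $ j $ j + (\<Sum>i\<in>I - {j}. Wbar W $ i $ j)"
      using True by (simp add: sum.remove)
    also have "Wbar W $ j $ j = 0" using wd by (simp add: Wbar_def)
    also have "(\<Sum>i\<in>I - {j}. Wbar W $ i $ j) \<le> T" by (rule top) (simp add: True cI)
    finally have "(\<Sum>i\<in>I. Wbar W $ i $ j) \<le> T" by simp
    moreover have "B $ j $ j = 1" using True by (simp add: I_def)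
    ultimately show ?thesis using C Tn by simp
  next
    case False
    have "I \<noteq> {}" using cI K1 by auto
    then obtain i0 where i0: "i0 \<in> I" by auto
    have "(\<Sum>i\<in>I. Wbar W $ i $ j) = Wbar W $ i0 $ j + (\<Sum>i\<in>I - {i0}. Wbar W $ i $ j)"
      using i0 by (simp add: sum.remove)
    also have "\<dots> \<le> 1 + T"
      using Wbar_le1[OF nn dp, of i0 j] top[of "I - {i0}"] i0 cI by simp
    finally have "(\<Sum>i\<in>I. Wbar W $ i $ j) \<le> 1 + T" .
    moreover have "B $ j $ j = 0" using False AK_entry[OF B, of j] by (auto simp: I_def)
    ultimately show ?thesis using C Tn by simp
  qed
qed

lemma cross_bound:
  fixes W B :: "real^'n^'n"
  assumes nn: "\<forall>i j. W $ i $ j \<ge> 0" and dp: "\<forall>i. outdeg W i > 0" and wd: "\<forall>i. W $ i $ i = 0"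
    and K1: "1 \<le> K" and KN: "K < CARD('n)" and B: "B \<in> AK K"
  shows "2 * ((B *v x) \<bullet> (Lrw W *v x)) \<le> n_const W K * (x \<bullet> x)"
proof -
  define a where "a i = B $ i $ i" for i
  define Wb where "Wb = Wbar W"
  define C where "C j = (\<Sum>i\<in>UNIV. a i * Wb $ i $ j)" for j
  have ann: "0 \<le> a i" for i using AK_entry[OF B, of i] by (auto simp: a_def)
  have wnn: "0 \<le> Wb $ i $ j" for i j using Wbar_nn[OF nn dp] by (simp add: Wb_def)
  have e1: "(B *v x) \<bullet> (Lrw W *v x) = (\<Sum>i\<in>UNIV. a i * (x $ i * x $ i))
      - (\<Sum>i\<in>UNIV. \<Sum>j\<in>UNIV. a i * Wb $ i $ j * (x $ i * x $ j))"
    by (simp add: inner_vec_def AK_mv[OF B] Lrw_mv a_def Wb_def algebra_simps sum_distrib_left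
        sum_subtractf)
  have "- 2 * (\<Sum>i\<in>UNIV. \<Sum>j\<in>UNIV. a i * Wb $ i $ j * (x $ i * x $ j))
      = (\<Sum>i\<in>UNIV. \<Sum>j\<in>UNIV. - 2 * (a i * Wb $ i $ j * (x $ i * x $ j)))"
    by (simp add: sum_distrib_left)
  also have "\<dots> \<le> (\<Sum>i\<in>UNIV. \<Sum>j\<in>UNIV. a i * Wb $ i $ j * (x $ i * x $ i) + a i * Wb $ i $ j * (x $ j * x $ j))"
  proof (intro sum_mono)
    fix i j
    have c: "0 \<le> a i * Wb $ i $ j" using ann wnn by simp
    have "0 \<le> a i * Wb $ i $ j * ((x $ i + x $ j) * (x $ i + x $ j))"
      using c by simp
    then show "- 2 * (a i * Wb $ i $ j * (x $ i * x $ j))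
        \<le> a i * Wb $ i $ j * (x $ i * x $ i) + a i * Wb $ i $ j * (x $ j * x $ j)"
      by (simp add: algebra_simps)
  qed
  also have "\<dots> = (\<Sum>i\<in>UNIV. a i * (x $ i * x $ i)) + (\<Sum>j\<in>UNIV. C j * (x $ j * x $ j))"
  proof -
    have r: "(\<Sum>j\<in>UNIV. Wb $ i $ j) = 1" for i using Wbar_rowsum[OF dp] by (simp add: Wb_def)
    have "(\<Sum>i\<in>UNIV. \<Sum>j\<in>UNIV. a i * Wb $ i $ j * (x $ i * x $ i))
        = (\<Sum>i\<in>UNIV. a i * (x $ i * x $ i) * (\<Sum>j\<in>UNIV. Wb $ i $ j))"
      by (simp add: sum_distrib_left algebra_simps)
    also have "\<dots> = (\<Sum>i\<in>UNIV. a i * (x $ i * x $ i))" by (simp add: r)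
    finally have p1: "(\<Sum>i\<in>UNIV. \<Sum>j\<in>UNIV. a i * Wb $ i $ j * (x $ i * x $ i)) = (\<Sum>i\<in>UNIV. a i * (x $ i * x $ i))" .
    have p2: "(\<Sum>i\<in>UNIV. \<Sum>j\<in>UNIV. a i * Wb $ i $ j * (x $ j * x $ j)) = (\<Sum>j\<in>UNIV. C j * (x $ j * x $ j))"
      by (subst sum.swap) (simp add: C_def sum_distrib_right)
    show ?thesis by (simp add: sum.distrib p1 p2)
  qed
  finally have e2: "- 2 * (\<Sum>i\<in>UNIV. \<Sum>j\<in>UNIV. a i * Wb $ i $ j * (x $ i * x $ j))
      \<le> (\<Sum>i\<in>UNIV. a i * (x $ i * x $ i)) + (\<Sum>j\<in>UNIV. C j * (x $ j * x $ j))" .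
  have "2 * ((B *v x) \<bullet> (Lrw W *v x)) \<le> 3 * (\<Sum>i\<in>UNIV. a i * (x $ i * x $ i)) + (\<Sum>j\<in>UNIV. C j * (x $ j * x $ j))"
    using e1 e2 by linarith
  also have "\<dots> = (\<Sum>j\<in>UNIV. (3 * a j + C j) * (x $ j * x $ j))"
    by (simp add: sum.distrib sum_distrib_left distrib_right mult.assoc)
  also have "\<dots> \<le> (\<Sum>j\<in>UNIV. n_const W K * (x $ j * x $ j))"
  proof (rule sum_mono)
    fix j
    have "3 * a j + C j \<le> n_const W K"
      using col_bound[OF nn dp wd K1 KN B, of j] by (simp add: a_def C_def Wb_def)
    then show "(3 * a j + C j) * (x $ j * x $ j) \<le> n_const W K * (x $ j * x $ j)"
      by (simp add: mult_right_mono)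
  qed
  also have "\<dots> = n_const W K * (x \<bullet> x)" by (simp add: inner_vec_def sum_distrib_left)
  finally show ?thesis .
qed



lemma mv_scaleR: "(c *\<^sub>R (X::real^'n^'m)) *v x = c *\<^sub>R (X *v x)"
  by (simp add: vec_eq_iff matrix_vector_mult_def sum_distrib_left algebra_simps)

lemma transpose_add': "transpose (X + Y) = transpose X + transpose (Y::real^'n^'n)"
  by (simp add: transpose_def vec_eq_iff)

lemma qf_LtL: "x \<bullet> ((transpose L ** L) *v x) = (L *v x) \<bullet> ((L::real^'n^'n) *v x)"
proof -
  have "x \<bullet> ((transpose L ** L) *v x) = x \<bullet> (transpose L *v (L *v x))"
    by (simp only: matrix_vector_mul_assoc)
  also have "\<dots> = (L *v x) \<bullet> (L *v x)"
    by (metis dot_lmul_matrix inner_commute transpose_matrix_vector vector_transpose_matrix transpose_transpose)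
  finally show ?thesis .
qed

lemma sym_LtL: "transpose (transpose L ** (L::real^'n^'n)) = transpose L ** L"
  by (simp add: matrix_transpose_mul)

lemma qf_sum: "x \<bullet> ((X + c *\<^sub>R Y) *v x) = x \<bullet> (X *v x) + c * (x \<bullet> ((Y::real^'n^'n) *v x))"
  by (simp add: matrix_vector_mult_add_rdistrib mv_scaleR inner_add_right)

lemma AK_qf: "B \<in> AK K \<Longrightarrow> x \<bullet> (B *v x) = (B *v x) \<bullet> (B *v x)"
proof -
  assume B: "B \<in> AK K"
  have e: "x $ i * (B $ i $ i * x $ i) = (B $ i $ i * x $ i) * (B $ i $ i * x $ i)" for i
    using AK_entry[OF B, of i] by auto
  show ?thesis unfolding inner_vec_def AK_mv[OF B] inner_real_def e ..
qed

lemma quad_pos: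
  fixes W B :: "real^'n^'n"
  assumes nn: "\<forall>i j. W $ i $ j \<ge> 0" and dp: "\<forall>i. outdeg W i > 0"
    and root: "\<exists>v. \<forall>u. (u, v) \<in> (edges W)\<^sup>*"
    and K1: "1 \<le> K" and B: "B \<in> AK K" and al: "\<alpha> > 0" and be: "\<beta> > 0" and v: "v \<noteq> 0"
  shows "0 < \<alpha> * ((Lrw W *v v) \<bullet> (Lrw W *v v)) + \<beta> * (v \<bullet> (B *v v))"
proof (rule ccontr)
  assume "\<not> ?thesis"
  moreover have "0 \<le> (Lrw W *v v) \<bullet> (Lrw W *v v)" by simp
  moreover have "0 \<le> (B *v v) \<bullet> (B *v v)" by simp
  ultimately have "(Lrw W *v v) \<bullet> (Lrw W *v v) = 0" "(B *v v) \<bullet> (B *v v) = 0"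
    using al be AK_qf[OF B, of v]
    by (smt (verit) mult_pos_pos mult_nonneg_nonneg)+
  then have "Lrw W *v v = 0" "B *v v = 0" by simp_all
  then show False using ker_zero[OF nn dp root K1 B] v by blast
qed

lemma root_prop:
  fixes b mu :: real
  assumes "mu > 0"
  shows "(- b + sqrt (b^2 + 4*mu))/2 > 0 \<and> ((- b + sqrt (b^2 + 4*mu))/2)^2 + b * ((- b + sqrt (b^2 + 4*mu))/2) = mu"
proof -
  define r where "r = sqrt (b^2 + 4*mu)"
  have "0 \<le> b^2" by simp
  then have "0 \<le> b^2 + 4*mu" using assms by linarith
  then have r2: "r^2 = b^2 + 4*mu" unfolding r_def by simp
  have r0: "r \<ge> 0" using \<open>0 \<le> b^2 + 4*mu\<close> by (simp add: r_def)
  have "b < r"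
  proof (rule ccontr)
    assume "\<not> b < r"
    then have "r \<le> b" by simp
    then have "r^2 \<le> b^2" using r0 by (simp add: power_mono)
    then show False using r2 assms by simp
  qed
  moreover have "((- b + r)/2)^2 + b * ((- b + r)/2) = mu"
    using r2 by (simp add: power2_eq_square field_simps)
  ultimately show ?thesis unfolding r_def[symmetric] by simp
qed



lemma alg1:
  fixes p s xx cr n m e mu c d r :: real
  assumes p: "p \<ge> 0" and s: "s \<ge> 0" and xx: "xx \<ge> 0" and cr: "2 * cr \<le> n * xx"
    and mb: "m * xx \<le> s + e * p" and m: "m > 0" and n: "n \<ge> 0" and e: "e > 0" and mu: "mu > 0"
    and emu: "e * mu < 1" and c: "c = n / m" and d: "d = sqrt (1 - e * mu)"
    and r: "r = (- d * c + sqrt (d^2 * c^2 + 4 * mu)) / 2"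
  shows "d^2 * p + 2 * d * r * cr + r^2 * s \<le> p + mu * s"
proof -
  have d2: "d^2 = 1 - e * mu" using emu d by simp
  have d0: "d > 0" using emu d by simp
  have r': "r = (- (d * c) + sqrt ((d * c)^2 + 4 * mu)) / 2" using r by (simp add: power_mult_distrib)
  have rp: "r > 0 \<and> r^2 + (d * c) * r = mu"
    using root_prop[OF mu, of "d * c"] unfolding r'[symmetric] .
  have c0: "c \<ge> 0" using c n m by simp
  have cm: "c * m = n" using c m by simp
  have dr0: "d * r \<ge> 0" using d0 rp by simp
  have "2 * d * r * cr = (d * r) * (2 * cr)" by simp
  also have "\<dots> \<le> (d * r) * (n * xx)" by (rule mult_left_mono[OF cr dr0])
  also have "\<dots> = (d * r * c) * (m * xx)" using cm by (simp add: algebra_simps)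
  also have "\<dots> \<le> (d * r * c) * (s + e * p)" using mb dr0 c0 by (intro mult_left_mono) auto
  also have "d * r * c = mu - r^2"
  proof -
    have "(d * c) * r = mu - r^2" using rp by linarith
    then show ?thesis by (simp add: mult.commute mult.left_commute)
  qed
  finally have h: "2 * d * r * cr \<le> (mu - r^2) * (s + e * p)" .
  have X: "(mu - r^2) * (s + e * p) = mu * s + mu * e * p - r^2 * s - r^2 * (e * p)"
    by (simp add: algebra_simps)
  have Y: "d^2 * p = p - mu * e * p" unfolding d2 by (simp add: algebra_simps)
  have Z: "0 \<le> r^2 * (e * p)" using e p by simp
  show ?thesis using h X Y Z by linarith
qed

lemma alg2:
  fixes p s xx cr n m e mu c d r :: real
  assumes p: "p \<ge> 0" and s: "s \<ge> 0" and xx: "xx \<ge> 0" and cr: "2 * cr \<le> n * xx"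
    and mb: "m * xx \<le> p + e * s" and m: "m > 0" and n: "n \<ge> 0" and e: "e > 0" and mu: "mu > 1"
    and e1: "e < 1" and c: "c = n / m" and r: "r = sqrt (mu - e)"
    and d: "d = (- r * c + sqrt (r^2 * c^2 + 4)) / 2"
  shows "d^2 * p + 2 * d * r * cr + r^2 * s \<le> p + mu * s"
proof -
  have r2: "r^2 = mu - e" using r mu e1 by simp
  have r0: "r \<ge> 0" using r mu e1 by simp
  have d': "d = (- (r * c) + sqrt ((r * c)^2 + 4 * 1)) / 2" using d by (simp add: power_mult_distrib)
  have dp: "d > 0 \<and> d^2 + (r * c) * d = 1"
    using root_prop[of 1 "r * c"] unfolding d'[symmetric] by simp
  have c0: "c \<ge> 0" using c n m by simp
  have cm: "c * m = n" using c m by simp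
  have dr0: "d * r \<ge> 0" using dp r0 by simp
  have "2 * d * r * cr = (d * r) * (2 * cr)" by simp
  also have "\<dots> \<le> (d * r) * (n * xx)" by (rule mult_left_mono[OF cr dr0])
  also have "\<dots> = (d * r * c) * (m * xx)" using cm by (simp add: algebra_simps)
  also have "\<dots> \<le> (d * r * c) * (p + e * s)" using mb dr0 c0 by (intro mult_left_mono) auto
  also have "d * r * c = 1 - d^2"
  proof -
    have "(r * c) * d = 1 - d^2" using dp by linarith
    then show ?thesis by (simp add: mult.commute mult.left_commute)
  qed
  finally have h: "2 * d * r * cr \<le> (1 - d^2) * (p + e * s)" .
  have X: "(1 - d^2) * (p + e * s) = p + e * s - d^2 * p - d^2 * (e * s)"
    by (simp add: algebra_simps)
  have Y: "r^2 * s = mu * s - e * s" unfolding r2 by (simp add: algebra_simps)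
  have Z: "0 \<le> d^2 * (e * s)" using e s by simp
  show ?thesis using h X Y Z by linarith
qed

lemma lam_min_pos:
  assumes "transpose Y = Y" "\<And>v. v \<noteq> 0 \<Longrightarrow> 0 < v \<bullet> ((Y::real^'n^'n) *v v)"
  shows "0 < lam_min Y"
proof -
  obtain v where v: "v \<noteq> 0" "Y *v v = lam_min Y *\<^sub>R v" using lam_min_props[OF assms(1)] by blast
  have "0 < v \<bullet> (Y *v v)" using assms(2) v(1) by blast
  also have "\<dots> = lam_min Y * (v \<bullet> v)" using v(2) by simp
  finally have "0 < lam_min Y * (v \<bullet> v)" .
  moreover have "0 < v \<bullet> v" using v(1) by simp
  ultimately show ?thesis by (metis zero_less_mult_pos2 mult.commute)
qed

lemma Min_AK:
  assumes A: "A \<in> AK K" and pos: "\<And>B. B \<in> AK K \<Longrightarrow> f B > (0::real)"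
  shows "Min (f ` AK K) > 0 \<and> Min (f ` AK K) \<le> f A"
proof
  have fin: "finite (f ` AK K)" using AK_finite by blast
  have ne: "f ` AK K \<noteq> {}" using A by blast
  show "Min (f ` AK K) > 0" using fin ne pos by (simp add: Min_gr_iff)
  show "Min (f ` AK K) \<le> f A" using fin A by (intro Min_le) auto
qed

lemma n_nonneg:
  assumes nn: "\<forall>i j. W $ i $ j \<ge> 0" and dp: "\<forall>i. outdeg W i > 0" and KN: "K < CARD('n)"
  shows "0 \<le> n_const (W::real^'n^'n) K"
proof -
  obtain j :: 'n where True by simp
  have "0 \<le> (\<Sum>k<K - 1. col_desc (Wbar W) j ! k)"
    using col_top[of "Wbar W" j "{}" "K - 1"] Wbar_nn[OF nn dp] KN by simp
  also have "\<dots> \<le> Max (range (\<lambda>i. \<Sum>k<K - 1. col_desc (Wbar W) i ! k))" by (intro Max_ge) auto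
  finally show ?thesis by (simp add: n_const_def)
qed



lemma core:
  fixes W A :: "real^'n^'n" and K :: nat and mu eps :: real
  assumes nn: "\<forall>i j. W $ i $ j \<ge> 0" and wd: "\<forall>i. W $ i $ i = 0" and dp: "\<forall>i. outdeg W i > 0"
    and root: "\<exists>v. \<forall>u. (u, v) \<in> (edges W)\<^sup>*"
    and K1: "1 \<le> K" and KN: "K < CARD('n)"
    and mu0: "mu > 0" and e0: "0 < eps" and e1: "eps < 1" and A: "A \<in> AK K"
  shows "((delta_const W K eps mu *\<^sub>R A + rho_const W K eps mu *\<^sub>R Lrw W) *v x) \<bullet>
         ((delta_const W K eps mu *\<^sub>R A + rho_const W K eps mu *\<^sub>R Lrw W) *v x)
      \<le> x \<bullet> ((A + mu *\<^sub>R (transpose (Lrw W) ** Lrw W)) *v x)"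
proof -
  define L where "L = Lrw W"
  define d where "d = delta_const W K eps mu"
  define r where "r = rho_const W K eps mu"
  define n where "n = n_const W K"
  define p where "p = x \<bullet> (A *v x)"
  define s where "s = (L *v x) \<bullet> (L *v x)"
  define cr where "cr = (A *v x) \<bullet> (L *v x)"
  define xx where "xx = x \<bullet> x"
  have pA: "p = (A *v x) \<bullet> (A *v x)" using AK_qf[OF A] by (simp add: p_def)
  have p0: "p \<ge> 0" unfolding pA by simp
  have s0: "s \<ge> 0" unfolding s_def by simp
  have xx0: "xx \<ge> 0" unfolding xx_def by simp
  have n0: "n \<ge> 0" unfolding n_def using n_nonneg[OF nn dp KN] .
  have crb: "2 * cr \<le> n * xx" unfolding cr_def n_def xx_def L_def using cross_bound[OF nn dp wd K1 KN A] .
  have Mx: "(d *\<^sub>R A + r *\<^sub>R L) *v x = d *\<^sub>R (A *v x) + r *\<^sub>R (L *v x)"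
    by (simp add: matrix_vector_mult_add_rdistrib mv_scaleR)
  have lhs: "((d *\<^sub>R A + r *\<^sub>R L) *v x) \<bullet> ((d *\<^sub>R A + r *\<^sub>R L) *v x) = d^2 * p + 2 * d * r * cr + r^2 * s"
    unfolding Mx pA cr_def s_def
    by (simp add: inner_add_left inner_add_right inner_commute[of "L *v x" "A *v x"] power2_eq_square algebra_simps)
  have rhs: "x \<bullet> ((A + mu *\<^sub>R (transpose L ** L)) *v x) = p + mu * s"
    unfolding qf_sum qf_LtL p_def s_def ..
  have symB: "transpose B = B" if "B \<in> AK K" for B using AK_transpose[OF that] .
  have key: "d^2 * p + 2 * d * r * cr + r^2 * s \<le> p + mu * s"
  proof (cases "mu \<le> 1")
    case True
    define f where "f B = lam_min (transpose L ** L + eps *\<^sub>R B)" for B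
    have pos: "f B > 0" if B: "B \<in> AK K" for B
      unfolding f_def
    proof (rule lam_min_pos)
      show "transpose (transpose L ** L + eps *\<^sub>R B) = transpose L ** L + eps *\<^sub>R B"
        by (simp add: transpose_add' transpose_scalar sym_LtL symB[OF B])
      fix v :: "real^'n" assume "v \<noteq> 0"
      then have "0 < 1 * ((Lrw W *v v) \<bullet> (Lrw W *v v)) + eps * (v \<bullet> (B *v v))"
        by (intro quad_pos[OF nn dp root K1 B]) (use e0 in auto)
      then show "0 < v \<bullet> ((transpose L ** L + eps *\<^sub>R B) *v v)"
        by (simp add: qf_sum qf_LtL L_def)
    qed
    define m where "m = Min (f ` AK K)"
    have m: "m > 0" "m \<le> f A" using Min_AK[OF A, of f] pos by (auto simp: m_def)
    have "f A * xx \<le> s + eps * p"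
    proof -
      have sy: "transpose (transpose L ** L + eps *\<^sub>R A) = transpose L ** L + eps *\<^sub>R A"
        by (simp add: transpose_add' transpose_scalar sym_LtL symB[OF A])
      have "f A * xx \<le> x \<bullet> ((transpose L ** L + eps *\<^sub>R A) *v x)"
        using lam_min_props[OF sy] by (simp add: f_def xx_def)
      also have "\<dots> = s + eps * p" by (simp add: qf_sum qf_LtL s_def p_def)
      finally show ?thesis .
    qed
    then have mb: "m * xx \<le> s + eps * p" using m(2) xx0 by (meson mult_right_mono order_trans)
    have emu: "eps * mu < 1"
    proof -
      have "eps * mu \<le> eps * 1" using True e0 by (intro mult_left_mono) auto
      then show ?thesis using e1 by simp
    qed
    have c: "c_const W K eps mu = n / m" using True by (simp add: c_const_def m_def f_def n_def L_def)
    have dd: "d = sqrt (1 - eps * mu)" using True by (simp add: d_def delta_const_def)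
    have rr: "r = (- d * c_const W K eps mu + sqrt (d^2 * (c_const W K eps mu)^2 + 4 * mu)) / 2"
      using True by (simp add: r_def rho_const_def Let_def dd)
    show ?thesis by (rule alg1[OF p0 s0 xx0 crb mb m(1) n0 e0 mu0 emu c dd rr])
  next
    case False
    define f where "f B = lam_min (B + eps *\<^sub>R (transpose L ** L))" for B
    have pos: "f B > 0" if B: "B \<in> AK K" for B
      unfolding f_def
    proof (rule lam_min_pos)
      show "transpose (B + eps *\<^sub>R (transpose L ** L)) = B + eps *\<^sub>R (transpose L ** L)"
        by (simp add: transpose_add' transpose_scalar sym_LtL symB[OF B])
      fix v :: "real^'n" assume "v \<noteq> 0"
      then have "0 < eps * ((Lrw W *v v) \<bullet> (Lrw W *v v)) + 1 * (v \<bullet> (B *v v))"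
        by (intro quad_pos[OF nn dp root K1 B]) (use e0 in auto)
      then show "0 < v \<bullet> ((B + eps *\<^sub>R (transpose L ** L)) *v v)"
        by (simp add: qf_sum qf_LtL L_def)
    qed
    define m where "m = Min (f ` AK K)"
    have m: "m > 0" "m \<le> f A" using Min_AK[OF A, of f] pos by (auto simp: m_def)
    have "f A * xx \<le> p + eps * s"
    proof -
      have sy: "transpose (A + eps *\<^sub>R (transpose L ** L)) = A + eps *\<^sub>R (transpose L ** L)"
        by (simp add: transpose_add' transpose_scalar sym_LtL symB[OF A])
      have "f A * xx \<le> x \<bullet> ((A + eps *\<^sub>R (transpose L ** L)) *v x)"
        using lam_min_props[OF sy] by (simp add: f_def xx_def)
      also have "\<dots> = p + eps * s" by (simp add: qf_sum qf_LtL s_def p_def)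
      finally show ?thesis .
    qed
    then have mb: "m * xx \<le> p + eps * s" using m(2) xx0 by (meson mult_right_mono order_trans)
    have mu1: "mu > 1" using False by simp
    have c: "c_const W K eps mu = n / m" using False by (simp add: c_const_def m_def f_def n_def L_def)
    have rr: "r = sqrt (mu - eps)" using False by (simp add: r_def rho_const_def)
    have dd: "d = (- r * c_const W K eps mu + sqrt (r^2 * (c_const W K eps mu)^2 + 4)) / 2"
      using False by (simp add: d_def delta_const_def Let_def rr)
    show ?thesis by (rule alg2[OF p0 s0 xx0 crb mb m(1) n0 e0 mu1 e1 c rr dd])
  qed
  show ?thesis using lhs rhs key by (simp add: d_def r_def L_def)
qed



lemma cmat_mult: "cmat (X ** Y) = cmat X ** cmat (Y::real^'n^'n)"
  by (simp add: vec_eq_iff matrix_matrix_mult_def cmat_def)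

lemma cmat_one: "cmat (mat 1 :: real^'n^'n) = mat 1"
  by (simp add: vec_eq_iff mat_def cmat_def)

lemma diag_inv:
  fixes S :: "real^'n^'n"
  assumes dg: "is_diag S" and pos: "\<forall>i. S $ i $ i > 0"
  shows "invertible S"
proof -
  define D where "D = (\<chi> i j. if i = j then 1 / S $ i $ i else (0::real))"
  have "S ** D = mat 1"
  proof -
    have "(S ** D) $ i $ j = (mat 1 :: real^'n^'n) $ i $ j" for i j
    proof -
      have "(S ** D) $ i $ j = (\<Sum>k\<in>UNIV. S $ i $ k * D $ k $ j)" by (simp add: matrix_matrix_mult_def)
      also have "\<dots> = S $ i $ j * D $ j $ j"
        by (subst sum.remove[of UNIV j]) (auto simp: D_def intro!: sum.neutral)
      also have "\<dots> = (mat 1 :: real^'n^'n) $ i $ j"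
        using dg pos by (cases "i = j") (auto simp: D_def is_diag_def mat_def less_imp_neq[symmetric])
      finally show ?thesis .
    qed
    then show ?thesis by (simp add: vec_eq_iff)
  qed
  moreover have "D ** S = mat 1"
  proof -
    have "(D ** S) $ i $ j = (mat 1 :: real^'n^'n) $ i $ j" for i j
    proof -
      have "(D ** S) $ i $ j = (\<Sum>k\<in>UNIV. D $ i $ k * S $ k $ j)" by (simp add: matrix_matrix_mult_def)
      also have "\<dots> = D $ i $ i * S $ i $ j"
        by (subst sum.remove[of UNIV i]) (auto simp: D_def intro!: sum.neutral)
      also have "\<dots> = (mat 1 :: real^'n^'n) $ i $ j"
        using dg pos by (cases "i = j") (auto simp: D_def is_diag_def mat_def less_imp_neq[symmetric])
      finally show ?thesis .
    qed
    then show ?thesis by (simp add: vec_eq_iff)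
  qed
  ultimately show ?thesis unfolding invertible_def by blast
qed

theorem proposition1:
  fixes W :: "real^'n^'n" and K :: nat and mu eps :: real
    and P :: "real^'n^'n \<Rightarrow> complex^'n^'n" and Lam :: "real^'n^'n \<Rightarrow> complex^'n^'n"
    and A S :: "real^'n^'n"
  assumes N2: "CARD('n) \<ge> 2"
    and K1: "1 \<le> K" and KN: "K < CARD('n)"
    and mu_pos: "mu > 0" and eps_pos: "0 < eps" and eps1: "eps < 1"
    and W_nonneg: "\<forall>i j. W $ i $ j \<ge> 0"
    and W_diag: "\<forall>i. W $ i $ i = 0"
    and deg_pos: "\<forall>i. outdeg W i > 0"
    and root: "\<exists>v. \<forall>u. (u, v) \<in> (edges W)\<^sup>*"
    and diagonalization: "\<forall>B \<in> AK K. invertible (P B) \<and> is_diag (Lam B) \<and>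
        cmat (delta_const W K eps mu *\<^sub>R B + rho_const W K eps mu *\<^sub>R Lrw W)
          = P B ** Lam B ** matrix_inv (P B)"
    and A_in: "A \<in> AK K"
    and S_diag: "is_diag S" and S_pos: "\<forall>i. S $ i $ i > 0"
    and gersh: "lam_minus_min (S ** (delta_const W K eps mu *\<^sub>R A + rho_const W K eps mu *\<^sub>R Lrw W)
                  ** matrix_inv S) \<ge> 0"
  shows "(lam_minus_min (S ** (delta_const W K eps mu *\<^sub>R A + rho_const W K eps mu *\<^sub>R Lrw W)
            ** matrix_inv S))^2 / (Max (gamma ` P ` AK K))^2
         \<le> lam_min (A + mu *\<^sub>R (transpose (Lrw W) ** Lrw W))"
proof -
  define M where "M = delta_const W K eps mu *\<^sub>R A + rho_const W K eps mu *\<^sub>R Lrw W"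
  define X where "X = A + mu *\<^sub>R (transpose (Lrw W) ** Lrw W)"
  define g where "g = lam_minus_min (S ** M ** matrix_inv S)"
  define gm where "gm = Max (gamma ` P ` AK K)"
  have g0: "0 \<le> g" using gersh by (simp add: g_def M_def)
  have ipS: "S ** matrix_inv S = mat 1" "matrix_inv S ** S = mat 1"
    using inv_props[OF diag_inv[OF S_diag S_pos]] by auto
  have eg: "g \<le> Re lam" if w: "w \<noteq> 0" and ev: "cmat M *v w = lam *s w" for w lam
  proof -
    define w' where "w' = cmat S *v w"
    have wbk: "cmat (matrix_inv S) *v w' = w"
      by (simp add: w'_def matrix_vector_mul_assoc cmat_mult[symmetric] ipS cmat_one)
    have w'0: "w' \<noteq> 0" using wbk w by auto
    have "cmat (S ** M ** matrix_inv S) *v w' = cmat S *v (cmat M *v (cmat (matrix_inv S) *v w'))"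
      by (simp add: cmat_mult matrix_vector_mul_assoc matrix_mul_assoc)
    also have "\<dots> = lam *s w'" unfolding wbk ev by (simp add: w'_def vector_scalar_commute)
    finally show ?thesis unfolding g_def by (rule gersh_eig[OF w'0])
  qed
  have dA: "invertible (P A)" "is_diag (Lam A)" "cmat M = P A ** Lam A ** matrix_inv (P A)"
    using diagonalization A_in by (auto simp: M_def)
  have db: "1 \<le> gamma (P A) \<and> g^2 * (x \<bullet> x) \<le> gamma (P A) * ((M *v x) \<bullet> (M *v x))" for x
    by (rule diag_bound[OF dA g0]) (rule eg; assumption)
  have gA1: "1 \<le> gamma (P A)" using db by blast
  have gAm: "gamma (P A) \<le> gm" unfolding gm_def
    using AK_finite A_in by (intro Max_ge) auto
  have symX: "transpose X = X"
    by (simp add: X_def transpose_add' transpose_scalar sym_LtL AK_transpose[OF A_in])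
  obtain v where v: "v \<noteq> 0" "X *v v = lam_min X *\<^sub>R v" using lam_min_props[OF symX] by blast
  have vv: "0 < v \<bullet> v" using v(1) by simp
  have "g^2 * (v \<bullet> v) \<le> gamma (P A) * ((M *v v) \<bullet> (M *v v))" using db by blast
  also have "\<dots> \<le> gamma (P A) * (v \<bullet> (X *v v))"
    using core[OF W_nonneg W_diag deg_pos root K1 KN mu_pos eps_pos eps1 A_in, of v] gA1
    by (intro mult_left_mono) (auto simp: M_def X_def)
  also have "\<dots> = (gamma (P A) * lam_min X) * (v \<bullet> v)" using v(2) by simp
  finally have "g^2 \<le> gamma (P A) * lam_min X" using vv by simp
  then have h1: "g^2 / gamma (P A) \<le> lam_min X" using gA1 by (simp add: divide_le_eq mult.commute)
  have "gamma (P A) \<le> gm^2"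
  proof -
    have "gm \<le> gm * gm" using gA1 gAm by (simp add: mult_le_cancel_left1)
    then show ?thesis using gAm by (simp add: power2_eq_square)
  qed
  then have "g^2 / gm^2 \<le> g^2 / gamma (P A)"
    using gA1 by (intro divide_left_mono) (auto intro!: mult_pos_pos)
  then show ?thesis using h1 unfolding g_def gm_def M_def X_def by linarith
qed

end
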